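(* For all positive integers $b_1,\dots,b_s$ and $\gamma$, the series $\widetilde H_{b_1,\dots,b_s}(z)$, with coefficients reduced modulo $3^\gamma$, can be expressed as a linear combination with coefficients in $(\mathbb Z/3^\gamma\mathbb Z)[z,(1+z)^{-1}]$ of the series $1$ and of finitely many series $\widetilde H_{a_1,\dots,a_r}(z)$ ($r\ge1$) in which none of the $a_i$ is divisible by $3$.
   Context: For positive integers $a_1,\dots,a_r$, $$\widetilde H_{a_1,\dots,a_r}(z)=\sum_{k_1>\dots>k_r\ge0}\prod_{j=1}^{r}\left(\frac{z^{3^{k_j}}(1+z^{3^{k_j}})}{1+z^{3^{k_j+1}}}\right)^{a_j},$$ a formal power series in $z$ with integer coefficients (rational functions expanded as power series in $z$); $\widetilde H_{\emptyset}=1$. *)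

theory Defs
  imports "HOL-Computational_Algebra.Formal_Power_Series" "HOL-Computational_Algebra.Polynomial_FPS"
begin

definition recip1 :: "int fps \<Rightarrow> int fps" where
  "recip1 f = fps_right_inverse f 1"

definition hterm :: "nat \<Rightarrow> int fps" where
  "hterm k = fps_X ^ (3 ^ k) * (1 + fps_X ^ (3 ^ k)) * recip1 (1 + fps_X ^ (3 ^ (k + 1)))"

(* index tuples k_1 > ... > k_r >= 0 (as a strictly decreasing list of length r),
   truncated to entries <= n; terms with k_1 > n have order >= 3^k_1 > n *)
definition htuples :: "nat \<Rightarrow> nat \<Rightarrow> nat list set" where
  "htuples r n = {ks. length ks = r \<and> sorted_wrt (>) ks \<and> set ks \<subseteq> {..n}}"

(* \widetilde H_{a_1..a_r}(z); the n-th coefficient of the (formally convergent) sum *)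
definition Htilde :: "nat list \<Rightarrow> int fps" where
  "Htilde as = Abs_fps (\<lambda>n. \<Sum>ks\<in>htuples (length as) n.
      fps_nth (\<Prod>j<length as. hterm (ks ! j) ^ (as ! j)) n)"

(* element p(z) * (1+z)^(-k) of Z[z,(1+z)^(-1)], as an integer power series *)
definition laurent_coeff :: "int poly \<times> nat \<Rightarrow> int fps" where
  "laurent_coeff c = fps_of_poly (fst c) * recip1 (1 + fps_X) ^ snd c"

definition fps_cong :: "int \<Rightarrow> int fps \<Rightarrow> int fps \<Rightarrow> bool" where
  "fps_cong m f g \<longleftrightarrow> (\<forall>n. m dvd (fps_nth f n - fps_nth g n))"

end

theory Submission
  imports Defs
begin
unbundle fps_syntax


definition cg :: "int \<Rightarrow> int fps \<Rightarrow> int fps \<Rightarrow> bool" where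
  "cg M f g \<longleftrightarrow> (\<exists>w. f - g = fps_const M * w)"

lemma cg_refl[simp]: "cg M f f" unfolding cg_def by (rule exI[of _ 0]) simp
lemma cg_sym: "cg M f g \<Longrightarrow> cg M g f"
  unfolding cg_def by (metis minus_diff_eq mult_minus_right)
lemma cg_trans: "cg M f g \<Longrightarrow> cg M g h \<Longrightarrow> cg M f h"
  unfolding cg_def by (metis (no_types, lifting) diff_add_cancel add_diff_eq distrib_left diff_diff_eq2)
lemma cg_add: "cg M a b \<Longrightarrow> cg M c d \<Longrightarrow> cg M (a + c) (b + d)"
  unfolding cg_def by (metis (no_types, lifting) add_diff_add distrib_left)
lemma cg_diff: "cg M a b \<Longrightarrow> cg M c d \<Longrightarrow> cg M (a - c) (b - d)"
  unfolding cg_def by (metis (no_types, opaque_lifting) diff_diff_eq diff_diff_eq2 right_diff_distrib add_diff_eq diff_add_eq)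
lemma cg_mult: "cg M a b \<Longrightarrow> cg M c d \<Longrightarrow> cg M (a * c) (b * d)"
proof -
  assume "cg M a b" "cg M c d"
  then obtain w v where w: "a - b = fps_const M * w" and v: "c - d = fps_const M * v" unfolding cg_def by blast
  have "a * c - b * d = (a - b) * c + b * (c - d)" by (simp add: algebra_simps)
  also have "\<dots> = fps_const M * (w * c + b * v)" by (simp add: w v algebra_simps)
  finally show ?thesis unfolding cg_def by blast
qed
lemma cg_power: "cg M a b \<Longrightarrow> cg M (a ^ n) (b ^ n)"
  by (induction n) (auto intro: cg_mult)
lemma cg_sum: "(\<And>i. i \<in> I \<Longrightarrow> cg M (f i) (g i)) \<Longrightarrow> cg M (\<Sum>i\<in>I. f i) (\<Sum>i\<in>I. g i)"
  by (induction I rule: infinite_finite_induct) (auto intro: cg_add)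
lemma cg_one: "cg 1 f g" unfolding cg_def by (rule exI[of _ "f - g"]) simp
lemma cg_times3: "cg M a b \<Longrightarrow> cg (3 * M) (fps_const 3 * a) (fps_const 3 * b)"
proof -
  assume "cg M a b"
  then obtain w where w: "a - b = fps_const M * w" unfolding cg_def by blast
  have "fps_const 3 * a - fps_const 3 * b = fps_const 3 * (a - b)" by (simp add: algebra_simps)
  also have "\<dots> = fps_const (3 * M) * w" by (simp add: w mult.assoc)
  finally show ?thesis unfolding cg_def by blast
qed
lemma cg_fps_cong: "cg M f g \<Longrightarrow> fps_cong M f g"
  unfolding cg_def fps_cong_def by (metis fps_sub_nth fps_mult_left_const_nth dvd_triv_left)

fun T :: "(nat \<Rightarrow> int fps) list \<Rightarrow> nat \<Rightarrow> int fps" where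
  "T [] n = 1"
| "T (f # fs) n = (\<Sum>k<n. f k * T fs k)"

definition S :: "(nat \<Rightarrow> int fps) list \<Rightarrow> int fps" where
  "S fs = Abs_fps (\<lambda>j. T fs (Suc j) $ j)"

lemma S_nth: "S fs $ j = T fs (Suc j) $ j" unfolding S_def by simp

lemma S_Nil[simp]: "S [] = 1"
  by (rule fps_ext) (simp add: S_nth)

lemma T_lin: "T (pre @ (\<lambda>k. f k + c * g k) # post) n = T (pre @ (f) # post) n + c * T (pre @ (g) # post) n"
  by (induction pre arbitrary: n)
     (simp_all add: algebra_simps sum.distrib sum_distrib_left)

lemma T_sum: "finite I \<Longrightarrow> T (pre @ (\<lambda>k. \<Sum>i\<in>I. g i k) # post) n = (\<Sum>i\<in>I. T (pre @ (g i) # post) n)"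
  by (induction pre arbitrary: n)
     (simp_all add: sum_distrib_right sum_distrib_left sum.swap[of _ I] algebra_simps)

lemma T_scal: "T (pre @ (\<lambda>k. c * f k) # post) n = c * T (pre @ (f) # post) n"
  by (induction pre arbitrary: n) (simp_all add: algebra_simps sum_distrib_left)

lemma S_lin3: "S (pre @ (\<lambda>k. f k + fps_const c * g k) # post) = S (pre @ (f) # post) + fps_const c * S (pre @ (g) # post)"
  by (rule fps_ext) (simp add: S_nth T_lin)

lemma S_sum: "finite I \<Longrightarrow> S (pre @ (\<lambda>k. \<Sum>i\<in>I. g i k) # post) = (\<Sum>i\<in>I. S (pre @ (g i) # post))"
  by (rule fps_ext) (simp add: S_nth T_sum fps_sum_nth)

definition ord_ok :: "(nat \<Rightarrow> int fps) \<Rightarrow> bool" where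
  "ord_ok f \<longleftrightarrow> (\<forall>k i. i \<le> k \<longrightarrow> f k $ i = 0)"

lemma mult_nth_zero: "(\<And>i. i \<le> j \<Longrightarrow> f $ i = 0) \<Longrightarrow> (f * g) $ j = (0::int)"
  by (auto simp: fps_mult_nth intro!: sum.neutral)

lemma T_stab: assumes "ord_ok f" "Suc j \<le> n" shows "T (f # fs) n $ j = T (f # fs) (Suc j) $ j"
  using assms(2)
proof (induction n rule: dec_induct)
  case (step n)
  have "(f n * T fs n) $ j = 0"
    using assms(1) step.hyps unfolding ord_ok_def by (intro mult_nth_zero) auto
  then show ?case using step by simp
qed simp

lemma T_S: assumes "ord_ok f" "j < n" shows "T (f # fs) n $ j = S (f # fs) $ j"
  using T_stab[OF assms(1)] assms(2) by (simp add: S_nth)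

lemma T_scal_S: assumes "fs \<noteq> []" "ord_ok (hd fs)" and that: "fs = pre @ (f) # post"
  shows "S (pre @ (\<lambda>k. c * f k) # post) = c * S fs"
proof (rule fps_ext)
  fix j
  obtain g gs where fs: "fs = g # gs" using assms(1) by (cases fs) auto
  have "S (pre @ (\<lambda>k. c * f k) # post) $ j = (c * T fs (Suc j)) $ j"
    by (simp add: S_nth T_scal that)
  also have "\<dots> = (\<Sum>i=0..j. c $ (j - i) * T fs (Suc j) $ i)"
    by (simp add: fps_mult_nth) (rule sum.reindex_bij_witness[of _ "\<lambda>i. j - i" "\<lambda>i. j - i"], auto)
  also have "\<dots> = (\<Sum>i=0..j. c $ (j - i) * S fs $ i)"
  proof (intro sum.cong refl)
    fix i assume "i \<in> {0..j}"
    then have "T fs (Suc j) $ i = S fs $ i" using assms(2) unfolding fs by (intro T_S) auto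
    then show "c $ (j - i) * T fs (Suc j) $ i = c $ (j - i) * S fs $ i" by simp
  qed
  also have "\<dots> = (c * S fs) $ j"
    by (simp add: fps_mult_nth) (rule sum.reindex_bij_witness[of _ "\<lambda>i. j - i" "\<lambda>i. j - i"], auto)
  finally show "S (pre @ (\<lambda>k. c * f k) # post) $ j = (c * S fs) $ j" .
qed

lemma T_cg: "(\<And>k. cg M (f k) (g k)) \<Longrightarrow> cg M (T (pre @ (f) # post) n) (T (pre @ (g) # post) n)"
  by (induction pre arbitrary: n) (auto intro!: cg_sum cg_mult)

lemma S_cg: assumes "\<And>k. cg M (f k) (g k)" shows "cg M (S (pre @ (f) # post)) (S (pre @ (g) # post))"
proof -
  have "\<forall>n. \<exists>w. T (pre @ (f) # post) n - T (pre @ (g) # post) n = fps_const M * w"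
    using T_cg[of M f g, OF assms] unfolding cg_def by blast
  then obtain W where W: "\<And>n. T (pre @ (f) # post) n - T (pre @ (g) # post) n = fps_const M * W n" by metis
  have "S (pre @ (f) # post) - S (pre @ (g) # post) = fps_const M * Abs_fps (\<lambda>j. W (Suc j) $ j)"
  proof (rule fps_ext)
    fix j
    have "(T (pre @ (f) # post) (Suc j) - T (pre @ (g) # post) (Suc j)) $ j = M * W (Suc j) $ j"
      by (simp only: W) simp
    then show "(S (pre @ (f) # post) - S (pre @ (g) # post)) $ j = (fps_const M * Abs_fps (\<lambda>j. W (Suc j) $ j)) $ j"
      by (simp add: S_nth)
  qed
  then show ?thesis unfolding cg_def by blast
qed



definition dec :: "nat \<Rightarrow> nat \<Rightarrow> nat list set" where
  "dec r n = {ks. length ks = r \<and> sorted_wrt (>) ks \<and> set ks \<subseteq> {..<n}}"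

lemma finite_dec: "finite (dec r n)"
proof -
  have "dec r n \<subseteq> {ks. set ks \<subseteq> {..<n} \<and> length ks = r}" unfolding dec_def by auto
  moreover have "finite {ks. set ks \<subseteq> {..<n} \<and> length ks = r}"
    by (rule finite_lists_length_eq) simp
  ultimately show ?thesis by (rule finite_subset)
qed

lemma dec_0: "dec 0 n = {[]}" unfolding dec_def by auto

lemma dec_Suc: "dec (Suc r) n = (\<lambda>(k, ks). k # ks) ` (SIGMA k:{..<n}. dec r k)"
proof (rule set_eqI, rule iffI)
  fix xs assume "xs \<in> dec (Suc r) n"
  then obtain k ks where xs: "xs = k # ks" and "length ks = r" "sorted_wrt (>) ks"
    "\<forall>x\<in>set ks. x < k" "k < n" "set ks \<subseteq> {..<n}"
    unfolding dec_def by (auto simp: length_Suc_conv)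
  then have "(k, ks) \<in> (SIGMA k:{..<n}. dec r k)" unfolding dec_def by auto
  then show "xs \<in> (\<lambda>(k, ks). k # ks) ` (SIGMA k:{..<n}. dec r k)" unfolding xs by force
next
  fix xs assume "xs \<in> (\<lambda>(k, ks). k # ks) ` (SIGMA k:{..<n}. dec r k)"
  then obtain k ks where xs: "xs = k # ks" and "k < n" "ks \<in> dec r k" by auto
  then show "xs \<in> dec (Suc r) n" unfolding dec_def by auto
qed

lemma T_expand: "T fs n = (\<Sum>ks\<in>dec (length fs) n. \<Prod>j<length fs. (fs ! j) (ks ! j))"
proof (induction fs arbitrary: n)
  case Nil
  then show ?case by (simp add: dec_0)
next
  case (Cons f fs)
  have inj: "inj_on (\<lambda>(k, ks). k # ks) (SIGMA k:{..<n}. dec (length fs) k)"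
    by (auto simp: inj_on_def)
  have "(\<Sum>ks\<in>dec (length (f # fs)) n. \<Prod>j<length (f # fs). ((f # fs) ! j) (ks ! j))
      = (\<Sum>p\<in>(SIGMA k:{..<n}. dec (length fs) k). \<Prod>j<Suc (length fs). ((f # fs) ! j) ((fst p # snd p) ! j))"
    unfolding length_Cons dec_Suc sum.reindex[OF inj] by (simp add: case_prod_beta o_def)
  also have "\<dots> = (\<Sum>p\<in>(SIGMA k:{..<n}. dec (length fs) k). f (fst p) * (\<Prod>j<length fs. (fs ! j) (snd p ! j)))"
    by (simp only: prod.lessThan_Suc_shift) simp
  also have "\<dots> = (\<Sum>k<n. \<Sum>ks\<in>dec (length fs) k. f k * (\<Prod>j<length fs. (fs ! j) (ks ! j)))"
    using sum.Sigma[of "{..<n}" "dec (length fs)" "\<lambda>k ks. f k * (\<Prod>j<length fs. (fs ! j) (ks ! j))"]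
    by (simp add: finite_dec case_prod_beta)
  also have "\<dots> = T (f # fs) n"
    by (simp add: Cons sum_distrib_left)
  finally show ?case by simp
qed

definition HL :: "nat \<Rightarrow> nat \<Rightarrow> int fps" where
  "HL a = (\<lambda>k. hterm k ^ a)"

lemma Htilde_S: "Htilde as = S (map HL as)"
proof (rule fps_ext)
  fix n
  have ht: "htuples (length as) n = dec (length as) (Suc n)"
    unfolding htuples_def dec_def by (auto simp: lessThan_Suc_atMost)
  show "Htilde as $ n = S (map HL as) $ n"
    unfolding Htilde_def S_nth T_expand
    by (simp add: ht fps_sum_nth HL_def)
qed

lemma Htilde_Nil[simp]: "Htilde [] = 1"
  by (simp add: Htilde_S)

lemma lt3pow: "k < (3::nat) ^ k"
  by (induction k) auto

lemma ord_ok_HL: assumes "a > 0" shows "ord_ok (HL a)"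
  unfolding ord_ok_def
proof (intro allI impI)
  fix k i :: nat assume ik: "i \<le> k"
  obtain g where hk: "hterm k = fps_X ^ (3 ^ k) * g" unfolding hterm_def by (auto simp: mult.assoc)
  obtain b where a: "a = Suc b" using assms by (cases a) auto
  have "HL a k = fps_X ^ (3 ^ k) * (g * hterm k ^ b)" unfolding HL_def a by (simp add: hk mult.assoc)
  moreover have "i < 3 ^ k" using ik lt3pow[of k] by linarith
  ultimately show "HL a k $ i = 0" by (simp only: fps_X_power_mult_nth) simp
qed



lemma T_C1: "T ((\<lambda>k. Q (Suc k)) # R # rest) A =
   T (Q # R # rest) A + Q A * T (R # rest) A - T ((\<lambda>k. Q (Suc k) * R k) # rest) A"
  by (induction A) (simp_all add: algebra_simps)

lemma T_C0: "T [\<lambda>k. Q (Suc k)] A = T [Q] A + Q A - Q 0"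
  by (induction A) (simp_all add: algebra_simps)

lemma T_lift: assumes "\<And>n. T Y1 n = T Y2 n + T Y3 n - T Y4 n"
  shows "T (pre @ Y1) n = T (pre @ Y2) n + T (pre @ Y3) n - T (pre @ Y4) n"
proof (induction pre arbitrary: n)
  case Nil then show ?case using assms by simp
next
  case (Cons a pre)
  show ?case by (simp add: Cons.IH right_diff_distrib distrib_left sum.distrib sum_subtractf)
qed

lemma S_lift: assumes "\<And>n. T Y1 n = T Y2 n + T Y3 n - T Y4 n"
  shows "S (pre @ Y1) = S (pre @ Y2) + S (pre @ Y3) - S (pre @ Y4)"
  by (rule fps_ext) (simp add: S_nth T_lift[OF assms])

lemma S_shift_mid: "S (pre @ P # (\<lambda>k. Q (Suc k)) # R # rest) =
   S (pre @ P # Q # R # rest) + S (pre @ (\<lambda>k. P k * Q k) # R # rest)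
   - S (pre @ P # (\<lambda>k. Q (Suc k) * R k) # rest)"
proof -
  have "\<And>n. T (P # (\<lambda>k. Q (Suc k)) # R # rest) n = T (P # Q # R # rest) n + T ((\<lambda>k. P k * Q k) # R # rest) n
     - T (P # (\<lambda>k. Q (Suc k) * R k) # rest) n"
    by (simp only: T.simps(2)[of P] T_C1) (simp add: algebra_simps sum.distrib sum_subtractf)
  from S_lift[OF this] show ?thesis by simp
qed

lemma S_shift_mid0: "S (pre @ [P, \<lambda>k. Q (Suc k)]) =
   S (pre @ [P, Q]) + S (pre @ [\<lambda>k. P k * Q k]) - S (pre @ [\<lambda>k. Q 0 * P k])"
proof -
  have "\<And>n. T [P, (\<lambda>k. Q (Suc k))] n = T [P, Q] n + T [\<lambda>k. P k * Q k] n
     - T [\<lambda>k. Q 0 * P k] n"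
    by (simp only: T.simps(2)[of P] T_C0) (simp add: algebra_simps sum.distrib sum_subtractf sum_distrib_left)
  from S_lift[OF this] show ?thesis by simp
qed

lemma S_shift_top: assumes "ord_ok Q"
  shows "S ((\<lambda>k. Q (Suc k)) # R # rest) = S (Q # R # rest) - S ((\<lambda>k. Q (Suc k) * R k) # rest)"
proof (rule fps_ext)
  fix j
  have "(Q (Suc j) * T (R # rest) (Suc j)) $ j = 0"
    using assms unfolding ord_ok_def by (intro mult_nth_zero) auto
  then show "S ((\<lambda>k. Q (Suc k)) # R # rest) $ j = (S (Q # R # rest) - S ((\<lambda>k. Q (Suc k) * R k) # rest)) $ j"
    unfolding S_nth T_C1 fps_add_nth fps_sub_nth by simp
qed

lemma S_shift_top0: assumes "ord_ok Q"
  shows "S [\<lambda>k. Q (Suc k)] = S [Q] - Q 0"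
proof (rule fps_ext)
  fix j
  have "Q (Suc j) $ j = 0"
    using assms unfolding ord_ok_def by auto
  then show "S [\<lambda>k. Q (Suc k)] $ j = (S [Q] - Q 0) $ j"
    unfolding S_nth T_C0 fps_add_nth fps_sub_nth by simp
qed



lemma recip1_inv: assumes "d > 0" shows "(1 + fps_X ^ d) * recip1 (1 + fps_X ^ d) = (1::int fps)"
  unfolding recip1_def using assms by (intro fps_right_inverse) simp

abbreviation rho :: "int fps" where "rho \<equiv> recip1 (1 + fps_X)"

lemma rho_inv: "(1 + fps_X) * rho = 1"
  using recip1_inv[of 1] by simp

definition LR :: "int fps \<Rightarrow> bool" where
  "LR f \<longleftrightarrow> (\<exists>c. f = laurent_coeff c)"

lemma LR_poly: "LR (fps_of_poly p)"
  unfolding LR_def laurent_coeff_def by (rule exI[of _ "(p, 0)"]) simp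

lemma LR_rho: "LR rho"
  unfolding LR_def laurent_coeff_def by (rule exI[of _ "(1, 1)"]) simp

lemma LR_0[simp]: "LR 0" using LR_poly[of 0] by simp
lemma LR_1[simp]: "LR 1" using LR_poly[of 1] by simp
lemma LR_const[simp]: "LR (fps_const c)" using LR_poly[of "[:c:]"] by (simp add: fps_of_poly_const)
lemma LR_X[simp]: "LR fps_X" using LR_poly[of "[:0,1:]"] by simp

lemma LR_mult: "LR f \<Longrightarrow> LR g \<Longrightarrow> LR (f * g)"
  unfolding LR_def laurent_coeff_def
proof (elim exE)
  fix c d assume f: "f = fps_of_poly (fst c) * rho ^ snd c" and g: "g = fps_of_poly (fst d) * rho ^ snd d"
  show "\<exists>e. f * g = fps_of_poly (fst e) * rho ^ snd e"
    by (rule exI[of _ "(fst c * fst d, snd c + snd d)"]) (simp add: f g fps_of_poly_mult power_add algebra_simps)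
qed

lemma gen_id: "((P::'a::comm_ring_1) * x ^ d + Q * x ^ c) * y ^ (c + d) = P * y ^ c * (x * y) ^ d + Q * y ^ d * (x * y) ^ c"
  by (simp add: power_mult_distrib power_add algebra_simps)

lemma LR_add: "LR f \<Longrightarrow> LR g \<Longrightarrow> LR (f + g)"
  unfolding LR_def laurent_coeff_def
proof (elim exE)
  fix c d assume f: "f = fps_of_poly (fst c) * rho ^ snd c" and g: "g = fps_of_poly (fst d) * rho ^ snd d"
  define u :: "int poly" where "u = [:1,1:]"
  have u: "fps_of_poly u = 1 + fps_X" unfolding u_def by (simp add: fps_of_poly_pCons)
  have e1: "((1 + fps_X) * rho) ^ n = 1" for n by (simp add: rho_inv)
  have "f + g = fps_of_poly (fst c * u ^ snd d + fst d * u ^ snd c) * rho ^ (snd c + snd d)"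
  proof -
    have h: "fps_of_poly (fst c * u ^ snd d + fst d * u ^ snd c) * rho ^ (snd c + snd d)
       = fps_of_poly (fst c) * rho ^ snd c * ((1 + fps_X) * rho) ^ snd d
         + fps_of_poly (fst d) * rho ^ snd d * ((1 + fps_X) * rho) ^ snd c"
    proof -
    have h: "fps_of_poly (fst c * u ^ snd d + fst d * u ^ snd c) = fps_of_poly (fst c) * (1 + fps_X) ^ snd d + fps_of_poly (fst d) * (1 + fps_X) ^ snd c"
      by (simp add: fps_of_poly_add fps_of_poly_mult fps_of_poly_power u)
    show ?thesis unfolding h gen_id by (rule refl)
  qed
    then show ?thesis by (simp add: e1 f g)
  qed
  then show "\<exists>e. f + g = fps_of_poly (fst e) * rho ^ snd e"
    by (intro exI[of _ "(fst c * u ^ snd d + fst d * u ^ snd c, snd c + snd d)"]) simp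
qed

lemma LR_uminus: "LR f \<Longrightarrow> LR (- f)"
proof -
  have "fps_const (-1) * f = - f" by (simp flip: fps_const_neg)
  then show "LR f \<Longrightarrow> LR (- f)" using LR_mult[of "fps_const (-1)" f] by simp
qed

lemma LR_diff: "LR f \<Longrightarrow> LR g \<Longrightarrow> LR (f - g)"
  using LR_add[of f "- g"] LR_uminus by simp

lemma LR_power: "LR f \<Longrightarrow> LR (f ^ n)"
  by (induction n) (auto intro: LR_mult)

lemma LR_sum: "(\<And>i. i \<in> I \<Longrightarrow> LR (f i)) \<Longrightarrow> LR (\<Sum>i\<in>I. f i)"
  by (induction I rule: infinite_finite_induct) (auto intro: LR_add)

lemma h0_rel: "hterm 0 = fps_X * rho ^ 2 + fps_const 3 * fps_X * rho ^ 2 * hterm 0"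
proof -
  define t where "t = hterm 0"
  define a where "a = recip1 (1 + fps_X ^ 3 :: int fps)"
  have ta: "t = fps_X * (1 + fps_X) * a" unfolding t_def a_def hterm_def by simp
  have ainv: "(1 + fps_X ^ 3) * a = 1" unfolding a_def by (rule recip1_inv) simp
  have ri: "(1 + fps_X) * rho = 1" by (rule rho_inv)
  have "t = fps_X * rho ^ 2 + fps_const 3 * fps_X * rho ^ 2 * t"
    using ta ainv ri by (simp add: fps_numeral_fps_const[symmetric]) algebra
  then show ?thesis unfolding t_def .
qed

lemma h0_approx: "\<exists>l. LR l \<and> cg (3 ^ N) (hterm 0) l"
proof (induction N)
  case 0 then show ?case by (intro exI[of _ 0]) (simp add: cg_one)
next
  case (Suc N)
  then obtain l where l: "LR l" "cg (3 ^ N) (hterm 0) l" by blast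
  define l' where "l' = fps_X * rho ^ 2 + fps_const 3 * (fps_X * rho ^ 2 * l)"
  have "LR l'" unfolding l'_def using l(1) by (intro LR_add LR_mult LR_power LR_rho) auto
  moreover have "cg (3 ^ Suc N) (hterm 0) l'"
  proof -
    have "cg (3 * 3 ^ N) (fps_const 3 * (fps_X * rho ^ 2 * hterm 0)) (fps_const 3 * (fps_X * rho ^ 2 * l))"
      by (intro cg_times3 cg_mult l cg_refl)
    then have "cg (3 ^ Suc N) (fps_X * rho ^ 2 + fps_const 3 * (fps_X * rho ^ 2 * hterm 0)) l'"
      unfolding l'_def by (intro cg_add) auto
    moreover have "fps_X * rho ^ 2 + fps_const 3 * (fps_X * rho ^ 2 * hterm 0) = hterm 0"
      using h0_rel by (simp add: mult.assoc)
    ultimately show ?thesis by simp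
  qed
  ultimately show ?case by blast
qed

lemma h0pow_approx: "\<exists>l. LR l \<and> cg (3 ^ N) (hterm 0 ^ m) l"
  using h0_approx[of N] by (auto intro: LR_power cg_power)

lemma h_rel: "hterm (Suc k) + fps_const 3 * (hterm k - hterm k ^ 3) * hterm (Suc k) = hterm k ^ 3"
proof -
  define x :: "int fps" where "x = fps_X ^ (3 ^ k)"
  define t where "t = hterm k"
  define s where "s = hterm (Suc k)"
  define a where "a = recip1 (1 + x ^ 3)"
  define b where "b = recip1 (1 + x ^ 9)"
  have x3: "fps_X ^ (3 ^ (k + 1)) = x ^ 3" "fps_X ^ (3 ^ Suc k) = x ^ 3" unfolding x_def by (simp_all add: power_mult[symmetric] mult.commute)
  have x9: "fps_X ^ (3 ^ (Suc k + 1)) = x ^ 9" unfolding x_def by (simp add: power_mult[symmetric] mult.commute)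
  have ta: "t = x * (1 + x) * a" unfolding t_def a_def hterm_def x_def[symmetric] x3 by simp
  have sb: "s = x ^ 3 * (1 + x ^ 3) * b" unfolding s_def b_def hterm_def x3 x9 by simp
  have ainv: "(1 + x ^ 3) * a = 1" unfolding a_def x3(1)[symmetric] by (rule recip1_inv) simp
  have binv: "(1 + x ^ 9) * b = 1" unfolding b_def x9[symmetric] by (rule recip1_inv) simp
  have "s + 3 * (t - t ^ 3) * s = t ^ 3"
    using ta sb ainv binv by algebra
  then show ?thesis unfolding s_def t_def by (simp add: fps_numeral_fps_const)
qed



definition LRP :: "int fps poly \<Rightarrow> bool" where
  "LRP p \<longleftrightarrow> (\<forall>i. LR (coeff p i))"

lemma LRP_0[simp]: "LRP 0" unfolding LRP_def by simp
lemma LRP_pCons: "LR a \<Longrightarrow> LRP p \<Longrightarrow> LRP (pCons a p)"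
  unfolding LRP_def by (auto simp: coeff_pCons split: nat.splits)
lemma LRP_add: "LRP p \<Longrightarrow> LRP q \<Longrightarrow> LRP (p + q)"
  unfolding LRP_def by (auto intro: LR_add)
lemma LRP_uminus: "LRP p \<Longrightarrow> LRP (- p)"
  unfolding LRP_def by (auto intro: LR_uminus)
lemma LRP_diff: "LRP p \<Longrightarrow> LRP q \<Longrightarrow> LRP (p - q)"
  unfolding LRP_def by (auto intro: LR_diff)
lemma LRP_mult: "LRP p \<Longrightarrow> LRP q \<Longrightarrow> LRP (p * q)"
  unfolding LRP_def coeff_mult by (auto intro!: LR_sum LR_mult)
lemma LRP_smult: "LR c \<Longrightarrow> LRP p \<Longrightarrow> LRP (smult c p)"
  unfolding LRP_def by (auto intro: LR_mult)
lemma LRP_1[simp]: "LRP 1"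
  using LRP_pCons[of 1 0] by (simp add: one_pCons)
lemma LRP_power: "LRP p \<Longrightarrow> LRP (p ^ n)"
  by (induction n) (auto intro: LRP_mult)

abbreviation vv :: "int fps poly" where "vv \<equiv> [:0, 1:]"
lemma LRP_vv[simp]: "LRP vv" by (intro LRP_pCons) auto

lemma sapprox: "\<exists>r. LRP r \<and> poly r 0 = 0 \<and>
   (\<forall>k. cg (3 ^ N) (hterm (Suc k)) (hterm k ^ 3 + fps_const 3 * poly r (hterm k)))"
proof (induction N)
  case 0 then show ?case by (intro exI[of _ 0]) (simp add: cg_one)
next
  case (Suc N)
  then obtain r where r: "LRP r" "poly r 0 = 0"
    "\<And>k. cg (3 ^ N) (hterm (Suc k)) (hterm k ^ 3 + fps_const 3 * poly r (hterm k))" by blast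
  define r' where "r' = - ((vv - vv ^ 3) * (vv ^ 3 + smult (fps_const 3) r))"
  have "LRP r'" unfolding r'_def using r(1)
    by (intro LRP_uminus LRP_mult LRP_diff LRP_add LRP_power LRP_smult) auto
  moreover have "poly r' 0 = 0" unfolding r'_def by simp
  moreover have "cg (3 ^ Suc N) (hterm (Suc k)) (hterm k ^ 3 + fps_const 3 * poly r' (hterm k))" for k
  proof -
    define t where "t = hterm k"
    define s where "s = hterm (Suc k)"
    have rel: "s = t ^ 3 - fps_const 3 * ((t - t ^ 3) * s)"
      using h_rel[of k] unfolding s_def t_def by (simp add: algebra_simps)
    have "cg (3 * 3 ^ N) (fps_const 3 * ((t - t ^ 3) * s)) (fps_const 3 * ((t - t ^ 3) * (t ^ 3 + fps_const 3 * poly r t)))"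
      using r(3)[of k] unfolding s_def t_def by (intro cg_times3 cg_mult cg_refl)
    then have "cg (3 ^ Suc N) (t ^ 3 - fps_const 3 * ((t - t ^ 3) * s))
        (t ^ 3 - fps_const 3 * ((t - t ^ 3) * (t ^ 3 + fps_const 3 * poly r t)))"
      by (intro cg_diff) auto
    moreover have "t ^ 3 - fps_const 3 * ((t - t ^ 3) * (t ^ 3 + fps_const 3 * poly r t)) = t ^ 3 + fps_const 3 * poly r' t"
      unfolding r'_def by (simp add: algebra_simps)
    ultimately show ?thesis using rel unfolding s_def t_def by simp
  qed
  ultimately show ?case by blast
qed

lemma powapprox: assumes "LRP r" "poly r 0 = 0"
  shows "\<exists>rm. LRP rm \<and> poly rm 0 = 0 \<and>
    (\<forall>x. (x ^ 3 + fps_const 3 * poly r x) ^ m = x ^ (3 * m) + fps_const 3 * poly rm x)"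
proof (induction m)
  case 0 then show ?case by (intro exI[of _ 0]) simp
next
  case (Suc m)
  then obtain rm where rm: "LRP rm" "poly rm 0 = 0"
    "\<And>x. (x ^ 3 + fps_const 3 * poly r x) ^ m = x ^ (3 * m) + fps_const 3 * poly rm x" by blast
  define rm' where "rm' = rm * vv ^ 3 + vv ^ (3 * m) * r + smult (fps_const 3) (rm * r)"
  have "LRP rm'" unfolding rm'_def using rm(1) assms(1)
    by (intro LRP_mult LRP_add LRP_power LRP_smult) auto
  moreover have "poly rm' 0 = 0" unfolding rm'_def using rm(2) assms(2) by simp
  moreover have "(x ^ 3 + fps_const 3 * poly r x) ^ Suc m = x ^ (3 * Suc m) + fps_const 3 * poly rm' x" for x
    unfolding power_Suc2 rm(3) rm'_def by (simp add: algebra_simps power_add power_mult)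
  ultimately show ?case by blast
qed

lemma spow: "\<exists>rm. LRP rm \<and> poly rm 0 = 0 \<and>
   (\<forall>k. cg (3 ^ N) (hterm (Suc k) ^ m) (hterm k ^ (3 * m) + fps_const 3 * poly rm (hterm k)))"
proof -
  obtain r where r: "LRP r" "poly r 0 = 0"
    "\<And>k. cg (3 ^ N) (hterm (Suc k)) (hterm k ^ 3 + fps_const 3 * poly r (hterm k))"
    using sapprox[of N] by blast
  obtain rm where rm: "LRP rm" "poly rm 0 = 0"
    "\<And>x. (x ^ 3 + fps_const 3 * poly r x) ^ m = x ^ (3 * m) + fps_const 3 * poly rm x"
    using powapprox[OF r(1,2), of m] by blast
  show ?thesis
    by (rule exI[of _ rm]) (use rm r in \<open>auto simp flip: rm(3) intro: cg_power\<close>)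
qed



definition pos :: "nat list \<Rightarrow> bool" where "pos as \<longleftrightarrow> (\<forall>a\<in>set as. a > 0)"
definition good :: "nat list \<Rightarrow> bool" where "good as \<longleftrightarrow> (\<forall>a\<in>set as. a > 0 \<and> \<not> 3 dvd a)"

inductive_set W :: "int \<Rightarrow> int fps set" for M :: int where
  W0: "0 \<in> W M"
| Wg: "good as \<Longrightarrow> LR c \<Longrightarrow> c * Htilde as \<in> W M"
| W3: "pos as \<Longrightarrow> LR c \<Longrightarrow> fps_const 3 * c * Htilde as \<in> W M"
| Wadd: "f \<in> W M \<Longrightarrow> g \<in> W M \<Longrightarrow> f + g \<in> W M"
| Wscal: "f \<in> W M \<Longrightarrow> LR c \<Longrightarrow> c * f \<in> W M"
| Wcg: "f \<in> W M \<Longrightarrow> cg M g f \<Longrightarrow> g \<in> W M"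

lemma W_neg: "f \<in> W M \<Longrightarrow> - f \<in> W M"
  using Wscal[of f M "-1"] LR_uminus[OF LR_1] by simp
lemma W_diff: "f \<in> W M \<Longrightarrow> g \<in> W M \<Longrightarrow> f - g \<in> W M"
  using Wadd[of f M "- g"] W_neg by simp
lemma W_sum: "(\<And>i. i \<in> I \<Longrightarrow> f i \<in> W M) \<Longrightarrow> (\<Sum>i\<in>I. f i) \<in> W M"
  by (induction I rule: infinite_finite_induct) (auto intro: W0 Wadd)
lemma W_LR: "LR l \<Longrightarrow> cg M f l \<Longrightarrow> f \<in> W M"
  using Wg[of "[]" l M] by (auto simp: good_def intro: Wcg)

lemma S_zero: "S (pre @ (\<lambda>k. 0) # post) = 0"
  using S_sum[of "{}" pre "\<lambda>i k. 0" post] by simp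

lemma pos_append[simp]: "pos (xs @ ys) \<longleftrightarrow> pos xs \<and> pos ys" unfolding pos_def by auto
lemma pos_Cons[simp]: "pos (x # ys) \<longleftrightarrow> x > 0 \<and> pos ys" unfolding pos_def by auto
lemma pos_Nil[simp]: "pos []" unfolding pos_def by auto

lemma ord_ok_hd: assumes "pos (pre @ b # post)" shows "ord_ok (hd (map HL (pre @ b # post)))"
  using assms by (cases pre) (auto intro: ord_ok_HL)

lemma PL3: assumes "pos pre" "pos post" "LRP r" "poly r 0 = 0"
  shows "fps_const 3 * S (map HL pre @ (\<lambda>k. poly r (hterm k)) # map HL post) \<in> W M"
proof -
  have eq: "(\<lambda>k. poly r (hterm k)) = (\<lambda>k. \<Sum>i\<in>{..degree r}. coeff r i * HL i k)"
    by (simp add: poly_altdef HL_def)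
  have "fps_const 3 * S (map HL pre @ (\<lambda>k. poly r (hterm k)) # map HL post)
     = (\<Sum>i\<in>{..degree r}. fps_const 3 * S (map HL pre @ (\<lambda>k. coeff r i * HL i k) # map HL post))"
    unfolding eq by (simp add: S_sum sum_distrib_left)
  also have "\<dots> \<in> W M"
  proof (rule W_sum)
    fix i assume "i \<in> {..degree r}"
    show "fps_const 3 * S (map HL pre @ (\<lambda>k. coeff r i * HL i k) # map HL post) \<in> W M"
    proof (cases "i = 0")
      case True
      then have "coeff r i = 0" using assms(4) by (simp add: poly_0_coeff_0)
      then show ?thesis by (simp add: S_zero W0)
    next
      case False
      have "S (map HL pre @ (\<lambda>k. coeff r i * HL i k) # map HL post) = coeff r i * S (map HL (pre @ i # post))"
        using False assms(1,2) by (intro T_scal_S ord_ok_hd) auto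
      also have "\<dots> = coeff r i * Htilde (pre @ i # post)" by (simp add: Htilde_S)
      finally show ?thesis using W3[of "pre @ i # post" "coeff r i" M] assms False
        by (simp add: mult.assoc LRP_def)
    qed
  qed
  finally show ?thesis .
qed

lemma QR: assumes "pos pre" "pos post" "b > 0" "Htilde (pre @ (3 * m + b) # post) \<in> W (3 ^ N)"
  shows "S (map HL pre @ (\<lambda>k. HL m (Suc k) * HL b k) # map HL post) \<in> W (3 ^ N)"
proof -
  obtain rm where rm: "LRP rm" "poly rm 0 = 0"
    "\<And>k. cg (3 ^ N) (hterm (Suc k) ^ m) (hterm k ^ (3 * m) + fps_const 3 * poly rm (hterm k))"
    using spow[of N m] by blast
  have "cg (3 ^ N) (HL m (Suc k) * HL b k) (HL (3 * m + b) k + fps_const 3 * poly (rm * vv ^ b) (hterm k))" for k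
  proof -
    have c1: "cg (3 ^ N) (HL m (Suc k) * HL b k) ((hterm k ^ (3 * m) + fps_const 3 * poly rm (hterm k)) * hterm k ^ b)"
      unfolding HL_def by (intro cg_mult rm(3) cg_refl)
    have e: "(hterm k ^ (3 * m) + fps_const 3 * poly rm (hterm k)) * hterm k ^ b
       = HL (3 * m + b) k + fps_const 3 * poly (rm * vv ^ b) (hterm k)"
      by (simp add: HL_def power_add distrib_right mult.assoc)
    show ?thesis using c1 unfolding e .
  qed
  then have "cg (3 ^ N) (S (map HL pre @ (\<lambda>k. HL m (Suc k) * HL b k) # map HL post))
      (S (map HL pre @ (\<lambda>k. HL (3 * m + b) k + fps_const 3 * poly (rm * vv ^ b) (hterm k)) # map HL post))"
    by (rule S_cg)
  also have "S (map HL pre @ (\<lambda>k. HL (3 * m + b) k + fps_const 3 * poly (rm * vv ^ b) (hterm k)) # map HL post)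
     = Htilde (pre @ (3 * m + b) # post) + fps_const 3 * S (map HL pre @ (\<lambda>k. poly (rm * vv ^ b) (hterm k)) # map HL post)"
    using S_lin3[of "map HL pre" "HL (3 * m + b)" 3 "\<lambda>k. poly (rm * vv ^ b) (hterm k)" "map HL post"]
    by (simp only: Htilde_S map_append list.map)
  finally have c: "cg (3 ^ N) (S (map HL pre @ (\<lambda>k. HL m (Suc k) * HL b k) # map HL post))
    (Htilde (pre @ (3 * m + b) # post) + fps_const 3 * S (map HL pre @ (\<lambda>k. poly (rm * vv ^ b) (hterm k)) # map HL post))" .
  have "fps_const 3 * S (map HL pre @ (\<lambda>k. poly (rm * vv ^ b) (hterm k)) # map HL post) \<in> W (3 ^ N)"
    using assms rm by (intro PL3 LRP_mult LRP_power) auto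
  then show ?thesis using c assms(4) by (meson Wcg Wadd)
qed



lemma Q0_W: assumes "Y \<in> W (3 ^ N)" shows "hterm 0 ^ m * Y \<in> W (3 ^ N)"
proof -
  obtain l where l: "LR l" "cg (3 ^ N) (hterm 0 ^ m) l" using h0pow_approx[of N m] by blast
  have "cg (3 ^ N) (hterm 0 ^ m * Y) (l * Y)" using l(2) by (intro cg_mult cg_refl)
  moreover have "l * Y \<in> W (3 ^ N)" using assms l(1) by (rule Wscal)
  ultimately show ?thesis by (meson Wcg)
qed

lemma Q0_W': "hterm 0 ^ m \<in> W (3 ^ N)"
  using h0pow_approx[of N m] by (meson W_LR)

lemma step:
  assumes pos: "pos as"
    and IHlen: "\<And>bs. length bs < length as \<Longrightarrow> pos bs \<Longrightarrow> Htilde bs \<in> W (3 ^ N)"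
    and IHsum: "\<And>bs. length bs = length as \<Longrightarrow> sum_list bs < sum_list as \<Longrightarrow> pos bs \<Longrightarrow> Htilde bs \<in> W (3 ^ N)"
  shows "Htilde as \<in> W (3 ^ N)"
proof (cases "good as")
  case True
  then show ?thesis using Wg[of as 1] by simp
next
  case False
  then obtain a where "a \<in> set as" "3 dvd a" using pos by (auto simp: good_def pos_def)
  then obtain pre post where as: "as = pre @ a # post" by (meson split_list)
  obtain m where a: "a = 3 * m" using \<open>3 dvd a\<close> by blast
  have pp: "pos pre" "pos post" "m > 0" using pos unfolding as a by auto
  obtain rm where rm: "LRP rm" "poly rm 0 = 0"
    "\<And>k. cg (3 ^ N) (hterm (Suc k) ^ m) (hterm k ^ (3 * m) + fps_const 3 * poly rm (hterm k))"
    using spow[of N m] by blast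
  define Q where "Q = HL m"
  define Qs where "Qs = (\<lambda>k. Q (Suc k))"
  have oQ: "ord_ok Q" unfolding Q_def using pp(3) by (rule ord_ok_HL)
  have lc: "cg (3 ^ N) (HL (3 * m) k) (Qs k + fps_const 3 * poly (- rm) (hterm k))" for k
  proof -
    have "cg (3 ^ N) (hterm (Suc k) ^ m - fps_const 3 * poly rm (hterm k))
       (hterm k ^ (3 * m) + fps_const 3 * poly rm (hterm k) - fps_const 3 * poly rm (hterm k))"
      using rm(3)[of k] by (intro cg_diff cg_refl)
    then show ?thesis unfolding Qs_def Q_def HL_def by (simp add: cg_sym)
  qed
  have c1: "cg (3 ^ N) (Htilde as) (S (map HL pre @ Qs # map HL post)
      + fps_const 3 * S (map HL pre @ (\<lambda>k. poly (- rm) (hterm k)) # map HL post))"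
  proof -
    have "cg (3 ^ N) (S (map HL pre @ HL (3 * m) # map HL post))
        (S (map HL pre @ (\<lambda>k. Qs k + fps_const 3 * poly (- rm) (hterm k)) # map HL post))"
      using lc by (rule S_cg)
    then show ?thesis
      by (simp only: S_lin3 Htilde_S as a map_append list.map)
  qed
  have w1: "fps_const 3 * S (map HL pre @ (\<lambda>k. poly (- rm) (hterm k)) # map HL post) \<in> W (3 ^ N)"
    using pp rm by (intro PL3) (auto intro: LRP_uminus)
  have w2: "S (map HL pre @ Qs # map HL post) \<in> W (3 ^ N)"
  proof (cases pre rule: rev_exhaust)
    case Nil
    note pre = Nil
    show ?thesis
    proof (cases post)
      case Nil
      have "S [Qs] = S [Q] - Q 0" unfolding Qs_def by (rule S_shift_top0[OF oQ])
      moreover have "S [Q] \<in> W (3 ^ N)"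
        using IHsum[of "[m]"] pp unfolding as a pre Nil Q_def by (simp add: Htilde_S)
      moreover have "Q 0 \<in> W (3 ^ N)" unfolding Q_def HL_def by (rule Q0_W')
      ultimately show ?thesis using pre Nil by (simp add: W_diff)
    next
      case (Cons b rest)
      have "S (Qs # HL b # map HL rest) = S (Q # HL b # map HL rest) - S ((\<lambda>k. Qs k * HL b k) # map HL rest)"
        unfolding Qs_def by (rule S_shift_top[OF oQ])
      moreover have "S (Q # HL b # map HL rest) \<in> W (3 ^ N)"
        using IHsum[of "m # b # rest"] pp unfolding as a pre Cons Q_def by (simp add: Htilde_S)
      moreover have "S ((\<lambda>k. Qs k * HL b k) # map HL rest) \<in> W (3 ^ N)"
        using QR[of "[]" rest b m N] IHlen[of "(3 * m + b) # rest"] pp unfolding as a pre Cons Qs_def Q_def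
        by simp
      ultimately show ?thesis using pre Cons by (simp add: W_diff)
    qed
  next
    case (snoc pre0 a')
    note pre = snoc
    define P where "P = HL a'"
    have PQ: "(\<lambda>k. P k * Q k) = HL (a' + m)" unfolding P_def Q_def HL_def by (simp add: power_add)
    have pa: "a' > 0" "pos pre0" using pp pre by auto
    show ?thesis
    proof (cases post)
      case Nil
      have "S (map HL pre0 @ [P, Qs]) = S (map HL pre0 @ [P, Q]) + S (map HL pre0 @ [\<lambda>k. P k * Q k])
          - S (map HL pre0 @ [\<lambda>k. Q 0 * P k])"
        unfolding Qs_def by (rule S_shift_mid0)
      moreover have "S (map HL pre0 @ [P, Q]) \<in> W (3 ^ N)"
        using IHsum[of "pre0 @ [a', m]"] pp pa unfolding as a pre Nil Q_def P_def by (simp add: Htilde_S)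
      moreover have "S (map HL pre0 @ [\<lambda>k. P k * Q k]) \<in> W (3 ^ N)"
        using IHlen[of "pre0 @ [a' + m]"] pp pa unfolding as a pre Nil PQ by (simp add: Htilde_S)
      moreover have "S (map HL pre0 @ [\<lambda>k. Q 0 * P k]) \<in> W (3 ^ N)"
      proof -
        have "S (map HL pre0 @ [\<lambda>k. Q 0 * P k]) = Q 0 * S (map HL (pre0 @ [a']))"
          using pa by (intro T_scal_S ord_ok_hd) (auto simp: P_def)
        moreover have "S (map HL (pre0 @ [a'])) \<in> W (3 ^ N)"
          using IHlen[of "pre0 @ [a']"] pa unfolding as pre by (simp add: Htilde_S)
        ultimately show ?thesis unfolding Q_def HL_def by (simp add: Q0_W)
      qed
      ultimately show ?thesis using pre Nil by (simp add: W_diff Wadd P_def)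
    next
      case (Cons b rest)
      have "S (map HL pre0 @ P # Qs # HL b # map HL rest) = S (map HL pre0 @ P # Q # HL b # map HL rest)
          + S (map HL pre0 @ (\<lambda>k. P k * Q k) # HL b # map HL rest)
          - S (map HL pre0 @ P # (\<lambda>k. Qs k * HL b k) # map HL rest)"
        unfolding Qs_def by (rule S_shift_mid)
      moreover have "S (map HL pre0 @ P # Q # HL b # map HL rest) \<in> W (3 ^ N)"
        using IHsum[of "pre0 @ a' # m # b # rest"] pp pa unfolding as a pre Cons Q_def P_def by (simp add: Htilde_S)
      moreover have "S (map HL pre0 @ (\<lambda>k. P k * Q k) # HL b # map HL rest) \<in> W (3 ^ N)"
        using IHlen[of "pre0 @ (a' + m) # b # rest"] pp pa unfolding as a pre Cons PQ by (simp add: Htilde_S)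
      moreover have "S (map HL pre0 @ P # (\<lambda>k. Qs k * HL b k) # map HL rest) \<in> W (3 ^ N)"
        using QR[of "pre0 @ [a']" rest b m N] IHlen[of "pre0 @ a' # (3 * m + b) # rest"] pp pa
        unfolding as a pre Cons Qs_def Q_def P_def by simp
      ultimately show ?thesis using pre Cons by (simp add: W_diff Wadd P_def)
    qed
  qed
  show ?thesis using c1 w1 w2 by (meson Wcg Wadd)
qed



lemma main: "pos as \<Longrightarrow> Htilde as \<in> W (3 ^ N)"
proof (induction "length as" arbitrary: as rule: less_induct)
  case (less as)
  note outer = less.hyps
  have "\<And>bs. length bs = length as \<Longrightarrow> pos bs \<Longrightarrow> Htilde bs \<in> W (3 ^ N)"
  proof -
    fix bs :: "nat list"
    show "length bs = length as \<Longrightarrow> pos bs \<Longrightarrow> Htilde bs \<in> W (3 ^ N)"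
    proof (induction "sum_list bs" arbitrary: bs rule: less_induct)
      case (less bs)
      show ?case
      proof (rule step)
        show "pos bs" by (rule less.prems(2))
      next
        fix ys :: "nat list" assume "length ys < length bs" "pos ys"
        then show "Htilde ys \<in> W (3 ^ N)" using outer less.prems(1) by simp
      next
        fix ys :: "nat list" assume "length ys = length bs" "sum_list ys < sum_list bs" "pos ys"
        then show "Htilde ys \<in> W (3 ^ N)" using less.hyps less.prems(1) by simp
      qed
    qed
  qed
  then show ?case using less.prems by blast
qed

inductive_set Sp :: "int \<Rightarrow> int fps set" for M :: int where
  Sp0: "0 \<in> Sp M"
| Spg: "good as \<Longrightarrow> LR c \<Longrightarrow> c * Htilde as \<in> Sp M"
| Spadd: "f \<in> Sp M \<Longrightarrow> g \<in> Sp M \<Longrightarrow> f + g \<in> Sp M"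
| Spscal: "f \<in> Sp M \<Longrightarrow> LR c \<Longrightarrow> c * f \<in> Sp M"
| Spcg: "f \<in> Sp M \<Longrightarrow> cg M g f \<Longrightarrow> g \<in> Sp M"

lemma Sp3: "f \<in> Sp M \<Longrightarrow> fps_const 3 * f \<in> Sp (3 * M)"
proof (induction rule: Sp.induct)
  case Sp0 then show ?case by (simp add: Sp.Sp0)
next
  case (Spg as c)
  then show ?case using Sp.Spg[of as "fps_const 3 * c" "3 * M"] by (simp add: LR_mult mult.assoc)
next
  case (Spadd f g) then show ?case using Sp.Spadd by (simp add: distrib_left)
next
  case (Spscal f c) then show ?case using Sp.Spscal[of "fps_const 3 * f" "3 * M" c] by (simp add: mult.left_commute)
next
  case (Spcg f g) then show ?case using Sp.Spcg cg_times3 by blast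
qed

lemma W_Sp: assumes "\<And>as. pos as \<Longrightarrow> Htilde as \<in> Sp M" shows "f \<in> W (3 * M) \<Longrightarrow> f \<in> Sp (3 * M)"
proof (induction rule: W.induct)
  case W0 then show ?case by (rule Sp0)
next
  case (Wg as c) then show ?case by (rule Spg)
next
  case (W3 as c)
  then have "fps_const 3 * Htilde as \<in> Sp (3 * M)" using assms Sp3 by blast
  then show ?case using Spscal[of _ _ c] W3 by (simp add: mult.left_commute mult.assoc)
next
  case (Wadd f g) then show ?case by (blast intro: Spadd)
next
  case (Wscal f c) then show ?case by (blast intro: Spscal)
next
  case (Wcg f g) then show ?case by (blast intro: Spcg)
qed

lemma all_Sp: "pos as \<Longrightarrow> Htilde as \<in> Sp (3 ^ g)"
proof (induction g arbitrary: as)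
  case 0 then show ?case using Spcg[OF Sp0, of 1 "Htilde as"] by (simp add: cg_one)
next
  case (Suc g)
  have "Htilde as \<in> W (3 * 3 ^ g)" using main[OF Suc.prems, of "Suc g"] by simp
  then show ?case using W_Sp[of "3 ^ g"] Suc.IH by simp
qed

lemma Sp_repr: "f \<in> Sp M \<Longrightarrow> \<exists>F c. finite F \<and> (\<forall>as\<in>F. good as) \<and> (\<forall>as\<in>F. LR (c as)) \<and>
   cg M f (\<Sum>as\<in>F. c as * Htilde as)"
proof (induction rule: Sp.induct)
  case Sp0 then show ?case by (intro exI[of _ "{}"]) simp
next
  case (Spg as c) then show ?case by (intro exI[of _ "{as}"] exI[of _ "\<lambda>_. c"]) simp
next
  case (Spadd f g)
  then obtain F1 c1 F2 c2 where h: "finite F1" "\<forall>as\<in>F1. good as" "\<forall>as\<in>F1. LR (c1 as)" "cg M f (\<Sum>as\<in>F1. c1 as * Htilde as)"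
    "finite F2" "\<forall>as\<in>F2. good as" "\<forall>as\<in>F2. LR (c2 as)" "cg M g (\<Sum>as\<in>F2. c2 as * Htilde as)" by blast
  define c where "c = (\<lambda>x. (if x \<in> F1 then c1 x else 0) + (if x \<in> F2 then c2 x else 0))"
  have "(\<Sum>as\<in>F1 \<union> F2. c as * Htilde as) = (\<Sum>as\<in>F1 \<union> F2. (if as \<in> F1 then c1 as * Htilde as else 0))
       + (\<Sum>as\<in>F1 \<union> F2. (if as \<in> F2 then c2 as * Htilde as else 0))"
    unfolding c_def sum.distrib[symmetric] by (intro sum.cong refl) (simp add: distrib_right)
  also have "\<dots> = (\<Sum>as\<in>F1. c1 as * Htilde as) + (\<Sum>as\<in>F2. c2 as * Htilde as)"
    using h(1,5) by (simp add: sum.If_cases Int_absorb1 Int_absorb2)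
  finally have eq: "(\<Sum>as\<in>F1 \<union> F2. c as * Htilde as) = (\<Sum>as\<in>F1. c1 as * Htilde as) + (\<Sum>as\<in>F2. c2 as * Htilde as)" .
  have lr: "\<forall>as\<in>F1 \<union> F2. LR (c as)"
  proof
    fix as assume "as \<in> F1 \<union> F2"
    have "LR (if as \<in> F1 then c1 as else 0)" using h(3) by simp
    moreover have "LR (if as \<in> F2 then c2 as else 0)" using h(7) by simp
    ultimately show "LR (c as)" unfolding c_def by (rule LR_add)
  qed
  have "cg M (f + g) (\<Sum>as\<in>F1 \<union> F2. c as * Htilde as)" unfolding eq using h(4,8) by (rule cg_add)
  then show ?case using h(1,2,5,6) lr by (intro exI[of _ "F1 \<union> F2"] exI[of _ c]) blast
next
  case (Spscal f c)
  then obtain F c1 where h: "finite F" "\<forall>as\<in>F. good as" "\<forall>as\<in>F. LR (c1 as)" "cg M f (\<Sum>as\<in>F. c1 as * Htilde as)" by blast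
  have "cg M (c * f) (\<Sum>as\<in>F. (c * c1 as) * Htilde as)"
    using cg_mult[OF cg_refl[of M c] h(4)] by (simp add: sum_distrib_left mult.assoc)
  then show ?case using h Spscal by (intro exI[of _ F] exI[of _ "\<lambda>x. c * c1 x"]) (auto intro: LR_mult)
next
  case (Spcg f g)
  then show ?case by (meson cg_trans)
qed

lemma final_aux:
  assumes "pos bs"
  shows "\<exists>F c. finite F \<and> (\<forall>as\<in>F. good as) \<and> (\<forall>as\<in>F. LR (c as)) \<and>
   cg (3 ^ g) (Htilde bs) (\<Sum>as\<in>F. c as * Htilde as)"
proof -
  have "Htilde bs \<in> Sp (3 ^ g)" using assms by (rule all_Sp)
  then show ?thesis by (rule Sp_repr)
qed

lemma final_aux2:
  assumes "finite F" "\<forall>as\<in>F. good as" "\<forall>as\<in>F. LR (c as)"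
    "cg M X (\<Sum>as\<in>F. c as * Htilde as)"
  shows "\<exists>(c0 :: int poly \<times> nat) (F :: nat list set) (c :: nat list \<Rightarrow> int poly \<times> nat).
           finite F \<and>
           (\<forall>as\<in>F. as \<noteq> [] \<and> (\<forall>a\<in>set as. a > 0 \<and> \<not> 3 dvd a)) \<and>
           fps_cong M X (laurent_coeff c0 + (\<Sum>as\<in>F. laurent_coeff (c as) * Htilde as))"
proof -
  define c' where "c' = (\<lambda>as. SOME p. c as = laurent_coeff p)"
  have c': "laurent_coeff (c' as) = c as" if "as \<in> F" for as
  proof -
    have "\<exists>p. c as = laurent_coeff p" using assms(3) that unfolding LR_def by blast
    then have "c as = laurent_coeff (c' as)" unfolding c'_def by (rule someI_ex)
    then show ?thesis by (rule sym)
  qed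
  define c0 where "c0 = (if [] \<in> F then c' [] else (0, 0))"
  have l0: "laurent_coeff (0, 0) = 0" unfolding laurent_coeff_def by simp
  have s2: "(\<Sum>as\<in>F - {[]}. c as * Htilde as) = (\<Sum>as\<in>F - {[]}. laurent_coeff (c' as) * Htilde as)"
    by (rule sum.cong) (auto simp: c')
  have eq: "(\<Sum>as\<in>F. c as * Htilde as) = laurent_coeff c0 + (\<Sum>as\<in>F - {[]}. laurent_coeff (c' as) * Htilde as)"
  proof (cases "[] \<in> F")
    case True
    have "(\<Sum>as\<in>F. c as * Htilde as) = c [] * Htilde [] + (\<Sum>as\<in>F - {[]}. c as * Htilde as)"
      by (rule sum.remove[OF assms(1) True])
    then show ?thesis unfolding s2 c0_def using True c'[OF True] by simp
  next
    case False
    then have FF: "F - {[]} = F" by blast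
    have A: "(\<Sum>as\<in>F. c as * Htilde as) = (\<Sum>as\<in>F - {[]}. c as * Htilde as)" unfolding FF ..
    have B: "laurent_coeff c0 = 0" unfolding c0_def using False l0 by simp
    show ?thesis unfolding A s2 B by simp
  qed
  have "fps_cong M X (laurent_coeff c0 + (\<Sum>as\<in>F - {[]}. laurent_coeff (c' as) * Htilde as))"
    using assms(4) unfolding eq by (rule cg_fps_cong)
  moreover have "\<forall>as\<in>F - {[]}. as \<noteq> [] \<and> (\<forall>a\<in>set as. a > 0 \<and> \<not> 3 dvd a)"
    using assms(2) unfolding good_def by blast
  moreover have "finite (F - {[]})" using assms(1) by blast
  ultimately show ?thesis by (intro exI[of _ c0] exI[of _ "F - {[]}"] exI[of _ c'] conjI)
qed

theorem lemma2p9: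
  fixes bs :: "nat list" and \<gamma> :: nat
  assumes "\<forall>b\<in>set bs. b > 0" and "\<gamma> > 0"
  shows "\<exists>(c0 :: int poly \<times> nat) (F :: nat list set) (c :: nat list \<Rightarrow> int poly \<times> nat).
           finite F \<and>
           (\<forall>as\<in>F. as \<noteq> [] \<and> (\<forall>a\<in>set as. a > 0 \<and> \<not> 3 dvd a)) \<and>
           fps_cong (3 ^ \<gamma>) (Htilde bs)
             (laurent_coeff c0 + (\<Sum>as\<in>F. laurent_coeff (c as) * Htilde as))"
proof -
  have "pos bs" using assms(1) unfolding pos_def by blast
  then obtain F c where "finite F" "\<forall>as\<in>F. good as" "\<forall>as\<in>F. LR (c as)"
    "cg (3 ^ \<gamma>) (Htilde bs) (\<Sum>as\<in>F. c as * Htilde as)"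
    using final_aux[of bs \<gamma>] by blast
  then show ?thesis by (rule final_aux2)
qed

end
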